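(* Let $\Omega\subseteq\mathbb{R}^n$ be open, let $D$ be a dense subset of $\Omega$, and let $f:D\to\mathbb{R}$ be continuous on $D$. Then (i) $F(D,\Omega,f)(x)=f(x)$ for all $x\in D$, and (ii) $F(D,\Omega,f)$ is H-continuous.
   Context: $\overline{\mathbb{R}}=\mathbb{R}\cup\{\pm\infty\}$, $\mathbb{I}\overline{\mathbb{R}}$ is the set of closed intervals $[\underline a,\overline a]$ with $\underline a\le\overline a$ in $\overline{\mathbb{R}}$, $a\in\overline{\mathbb{R}}$ identified with $[a,a]$. $\mathbb{A}(X)$ is the set of functions $X\to\mathbb{I}\overline{\mathbb{R}}$. $B_\delta(x)=\{y\in\Omega:\|x-y\|<\delta\}$. For dense $D\subseteq\Omega$ and $f\in\mathbb{A}(D)$: $I(D,\Omega,f)(x)=\sup_{\delta>0}\inf\{z\in f(y):y\in B_\delta(x)\cap D\}$, $S(D,\Omega,f)(x)=\inf_{\delta>0}\sup\{z\in f(y):y\in B_\delta(x)\cap D\}$, $F(D,\Omega,f)(x)=[I(D,\Omega,f)(x),S(D,\Omega,f)(x)]$ for $x\in\Omega$; $F(f)=F(\Omega,\Omega,f)$. A function $h\in\mathbb{A}(\Omega)$ is H-continuous if for every $g\in\mathbb{A}(\Omega)$ with $g(x)\subseteq h(x)$ for all $x\in\Omega$ one has $F(g)=h$. *)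

theory Defs
  imports "HOL-Analysis.Analysis"
begin

type_synonym ivl = "ereal \<times> ereal"

definition ivl_set :: "ivl \<Rightarrow> ereal set" where
  "ivl_set a = {z. fst a \<le> z \<and> z \<le> snd a}"

definition pt :: "ereal \<Rightarrow> ivl" where
  "pt a = (a, a)"

definition ivl_funs :: "'a set \<Rightarrow> ('a \<Rightarrow> ivl) set" where
  "ivl_funs X = {f. \<forall>x\<in>X. fst (f x) \<le> snd (f x)}"

definition Bd :: "'a::real_normed_vector set \<Rightarrow> real \<Rightarrow> 'a \<Rightarrow> 'a set" where
  "Bd \<Omega> \<delta> x = {y\<in>\<Omega>. norm (x - y) < \<delta>}"

definition Ilow :: "'a::real_normed_vector set \<Rightarrow> 'a set \<Rightarrow> ('a \<Rightarrow> ivl) \<Rightarrow> 'a \<Rightarrow> ereal" where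
  "Ilow D \<Omega> f x = (SUP \<delta>\<in>{0<..}. Inf {z. \<exists>y\<in>Bd \<Omega> \<delta> x \<inter> D. z \<in> ivl_set (f y)})"

definition Supp :: "'a::real_normed_vector set \<Rightarrow> 'a set \<Rightarrow> ('a \<Rightarrow> ivl) \<Rightarrow> 'a \<Rightarrow> ereal" where
  "Supp D \<Omega> f x = (INF \<delta>\<in>{0<..}. Sup {z. \<exists>y\<in>Bd \<Omega> \<delta> x \<inter> D. z \<in> ivl_set (f y)})"

definition Fenv :: "'a::real_normed_vector set \<Rightarrow> 'a set \<Rightarrow> ('a \<Rightarrow> ivl) \<Rightarrow> 'a \<Rightarrow> ivl" where
  "Fenv D \<Omega> f x = (Ilow D \<Omega> f x, Supp D \<Omega> f x)"

definition H_continuous :: "'a::real_normed_vector set \<Rightarrow> ('a \<Rightarrow> ivl) \<Rightarrow> bool" where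
  "H_continuous \<Omega> h \<longleftrightarrow> h \<in> ivl_funs \<Omega> \<and>
     (\<forall>g \<in> ivl_funs \<Omega>. (\<forall>x\<in>\<Omega>. ivl_set (g x) \<subseteq> ivl_set (h x)) \<longrightarrow>
        (\<forall>x\<in>\<Omega>. Fenv \<Omega> \<Omega> g x = h x))"

end

theory Submission
  imports Defs
begin

lemma Inf_V:
  assumes "\<forall>y\<in>A. fst (g y) \<le> snd (g y)"
  shows "Inf {z. \<exists>y\<in>A. z \<in> ivl_set (g y)} = (INF y\<in>A. fst (g y))"
proof (rule antisym)
  show "Inf {z. \<exists>y\<in>A. z \<in> ivl_set (g y)} \<le> (INF y\<in>A. fst (g y))"
    by (rule INF_greatest, rule Inf_lower) (use assms in \<open>auto simp: ivl_set_def\<close>)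
  show "(INF y\<in>A. fst (g y)) \<le> Inf {z. \<exists>y\<in>A. z \<in> ivl_set (g y)}"
    by (rule Inf_greatest) (auto simp: ivl_set_def intro: INF_lower2)
qed

lemma Sup_V:
  assumes "\<forall>y\<in>A. fst (g y) \<le> snd (g y)"
  shows "Sup {z. \<exists>y\<in>A. z \<in> ivl_set (g y)} = (SUP y\<in>A. snd (g y))"
proof (rule antisym)
  show "(SUP y\<in>A. snd (g y)) \<le> Sup {z. \<exists>y\<in>A. z \<in> ivl_set (g y)}"
    by (rule SUP_least, rule Sup_upper) (use assms in \<open>auto simp: ivl_set_def\<close>)
  show "Sup {z. \<exists>y\<in>A. z \<in> ivl_set (g y)} \<le> (SUP y\<in>A. snd (g y))"
    by (rule Sup_least) (auto simp: ivl_set_def intro: SUP_upper2)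
qed

lemma Bd_sub:
  assumes "y \<in> Bd \<Omega> \<delta> x"
  shows "Bd \<Omega> (\<delta> - norm (x - y)) y \<subseteq> Bd \<Omega> \<delta> x" "\<delta> - norm (x - y) > 0"
proof -
  show "\<delta> - norm (x - y) > 0" using assms by (auto simp: Bd_def)
  show "Bd \<Omega> (\<delta> - norm (x - y)) y \<subseteq> Bd \<Omega> \<delta> x"
  proof
    fix z assume "z \<in> Bd \<Omega> (\<delta> - norm (x - y)) y"
    then have "z \<in> \<Omega>" "norm (y - z) < \<delta> - norm (x - y)" by (auto simp: Bd_def)
    moreover have "norm (x - z) \<le> norm (x - y) + norm (y - z)"
      using norm_triangle_ineq[of "x - y" "y - z"] by simp
    ultimately show "z \<in> Bd \<Omega> \<delta> x" by (auto simp: Bd_def)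
  qed
qed

lemma env_low_le:
  fixes \<phi> :: "'a::real_normed_vector \<Rightarrow> ereal"
  assumes "y \<in> Bd \<Omega> \<delta> x"
  shows "(INF z\<in>Bd \<Omega> \<delta> x \<inter> A. \<phi> z) \<le> (SUP e\<in>{0<..}. INF z\<in>Bd \<Omega> e y \<inter> A. \<phi> z)"
proof -
  let ?e = "\<delta> - norm (x - y)"
  have "(INF z\<in>Bd \<Omega> \<delta> x \<inter> A. \<phi> z) \<le> (INF z\<in>Bd \<Omega> ?e y \<inter> A. \<phi> z)"
    by (rule INF_superset_mono) (use Bd_sub[OF assms] in auto)
  moreover have "?e \<in> {0<..}" using Bd_sub(2)[OF assms] by simp
  ultimately show ?thesis by (blast intro: SUP_upper2)
qed

lemma env_up_le:
  fixes \<phi> :: "'a::real_normed_vector \<Rightarrow> ereal"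
  assumes "y \<in> Bd \<Omega> \<delta> x"
  shows "(INF e\<in>{0<..}. SUP z\<in>Bd \<Omega> e y \<inter> A. \<phi> z) \<le> (SUP z\<in>Bd \<Omega> \<delta> x \<inter> A. \<phi> z)"
proof -
  let ?e = "\<delta> - norm (x - y)"
  have "(SUP z\<in>Bd \<Omega> ?e y \<inter> A. \<phi> z) \<le> (SUP z\<in>Bd \<Omega> \<delta> x \<inter> A. \<phi> z)"
    by (rule SUP_subset_mono) (use Bd_sub[OF assms] in auto)
  moreover have "?e \<in> {0<..}" using Bd_sub(2)[OF assms] by simp
  ultimately show ?thesis by (blast intro: INF_lower2)
qed

theorem theorem7:
  fixes \<Omega> D :: "'n::euclidean_space set" and f :: "'n \<Rightarrow> real"
  assumes "open \<Omega>" and "D \<subseteq> \<Omega>" and "\<Omega> \<subseteq> closure D"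
    and "continuous_on D f"
  shows "(\<forall>x\<in>D. Fenv D \<Omega> (\<lambda>y. pt (ereal (f y))) x = pt (ereal (f x)))
         \<and> H_continuous \<Omega> (Fenv D \<Omega> (\<lambda>y. pt (ereal (f y))))"
proof -
  define fp where "fp = (\<lambda>y. pt (ereal (f y)))"
  define I where "I = (\<lambda>x. SUP \<delta>\<in>{0<..}. INF y\<in>Bd \<Omega> \<delta> x \<inter> D. ereal (f y))"
  define S where "S = (\<lambda>x. INF \<delta>\<in>{0<..}. SUP y\<in>Bd \<Omega> \<delta> x \<inter> D. ereal (f y))"
  have fpok: "\<forall>y\<in>A. fst (fp y) \<le> snd (fp y)" for A by (simp add: fp_def pt_def)
  have IS: "Fenv D \<Omega> fp x = (I x, S x)" for x
    unfolding Fenv_def Ilow_def Supp_def I_def S_def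
    using Inf_V[OF fpok] Sup_V[OF fpok] by (simp add: fp_def pt_def)
  have P1: "I x = ereal (f x) \<and> S x = ereal (f x)" if "x \<in> D" for x
  proof -
    have xin: "x \<in> Bd \<Omega> \<delta> x \<inter> D" if "\<delta> > 0" for \<delta>
      using \<open>x \<in> D\<close> assms(2) that by (auto simp: Bd_def)
    have a: "I x \<le> ereal (f x)" unfolding I_def
      by (rule SUP_least) (auto intro: INF_lower2[OF xin])
    have b: "ereal (f x) \<le> S x" unfolding S_def
      by (rule INF_greatest) (auto intro: SUP_upper2[OF xin])
    have c: "ereal (f x) \<le> I x \<and> S x \<le> ereal (f x)"
    proof -
      have "ereal (f x) \<le> I x + ereal e \<and> S x \<le> ereal (f x) + ereal e" if "e > 0" for e
      proof -
        obtain d where d: "d > 0" "\<forall>y\<in>D. dist y x < d \<longrightarrow> dist (f y) (f x) < e"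
          using assms(4) \<open>x \<in> D\<close> \<open>e > 0\<close> unfolding continuous_on_iff by blast
        have close: "f x - e \<le> f y \<and> f y \<le> f x + e" if "y \<in> Bd \<Omega> d x \<inter> D" for y
        proof -
          have "dist y x < d" using that by (auto simp: Bd_def dist_norm norm_minus_commute)
          then have "dist (f y) (f x) < e" using d that by auto
          then show ?thesis by (auto simp: dist_real_def)
        qed
        have "ereal (f x - e) \<le> (INF y\<in>Bd \<Omega> d x \<inter> D. ereal (f y))"
          by (rule INF_greatest) (use close in auto)
        also have "\<dots> \<le> I x" unfolding I_def using d(1) by (auto intro: SUP_upper2)
        finally have 1: "ereal (f x - e) \<le> I x" .
        have "S x \<le> (SUP y\<in>Bd \<Omega> d x \<inter> D. ereal (f y))"
          unfolding S_def using d(1) by (auto intro: INF_lower2)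
        also have "\<dots> \<le> ereal (f x + e)"
          by (rule SUP_least) (use close in auto)
        finally have 2: "S x \<le> ereal (f x + e)" .
        have "ereal (f x) \<le> ereal (f x - e) + ereal e" by simp
        with 1 have "ereal (f x) \<le> I x + ereal e"
          by (metis add_right_mono order_trans)
        moreover have "S x \<le> ereal (f x) + ereal e" using 2 by simp
        ultimately show ?thesis by blast
      qed
      then show ?thesis by (auto intro: ereal_le_epsilon2)
    qed
    show ?thesis using a b c by auto
  qed
  have P2: "I x \<le> S x" if "x \<in> \<Omega>" for x
    unfolding I_def S_def
  proof (rule SUP_least, rule INF_greatest)
    fix d1 d2 :: real assume "d1 \<in> {0<..}" "d2 \<in> {0<..}"
    then have "min d1 d2 > 0" by auto
    moreover have "x \<in> closure D" using that assms(3) by auto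
    ultimately obtain y where y: "y \<in> D" "dist y x < min d1 d2"
      unfolding closure_approachable by blast
    then have y1: "y \<in> Bd \<Omega> d1 x \<inter> D" and y2: "y \<in> Bd \<Omega> d2 x \<inter> D"
      using assms(2) by (auto simp: Bd_def dist_norm norm_minus_commute)
    show "(INF y\<in>Bd \<Omega> d1 x \<inter> D. ereal (f y)) \<le> (SUP y\<in>Bd \<Omega> d2 x \<inter> D. ereal (f y))"
      by (rule order_trans[OF INF_lower[OF y1] SUP_upper[OF y2]])
  qed
  have part1: "\<forall>x\<in>D. Fenv D \<Omega> fp x = pt (ereal (f x))"
    using P1 IS by (simp add: pt_def)
  have hfun: "Fenv D \<Omega> fp \<in> ivl_funs \<Omega>"
    using P2 IS by (simp add: ivl_funs_def)
  have Hc: "\<forall>x\<in>\<Omega>. Fenv \<Omega> \<Omega> g x = Fenv D \<Omega> fp x"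
    if g: "g \<in> ivl_funs \<Omega>" and sub: "\<forall>x\<in>\<Omega>. ivl_set (g x) \<subseteq> ivl_set (Fenv D \<Omega> fp x)" for g
  proof
    fix x assume "x \<in> \<Omega>"
    have gok: "\<forall>y\<in>A. fst (g y) \<le> snd (g y)" if "A \<subseteq> \<Omega>" for A
      using g that by (auto simp: ivl_funs_def)
    have gb: "I y \<le> fst (g y) \<and> fst (g y) \<le> snd (g y) \<and> snd (g y) \<le> S y" if "y \<in> \<Omega>" for y
    proof -
      have le: "fst (g y) \<le> snd (g y)" using g that by (auto simp: ivl_funs_def)
      have "fst (g y) \<in> ivl_set (g y)" "snd (g y) \<in> ivl_set (g y)"
        using le by (auto simp: ivl_set_def)
      then have "fst (g y) \<in> ivl_set (I y, S y)" "snd (g y) \<in> ivl_set (I y, S y)"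
        using sub that IS by auto
      then show ?thesis using le by (auto simp: ivl_set_def)
    qed
    have gD: "fst (g y) = ereal (f y) \<and> snd (g y) = ereal (f y)" if "y \<in> D" for y
    proof -
      have "y \<in> \<Omega>" using that assms(2) by auto
      then have h: "ereal (f y) \<le> fst (g y)" "fst (g y) \<le> snd (g y)" "snd (g y) \<le> ereal (f y)"
        using gb[of y] P1[OF that] by auto
      show ?thesis using h by (metis order.trans order.antisym)
    qed
    have sub1: "Bd \<Omega> \<delta> x \<inter> \<Omega> \<subseteq> \<Omega>" for \<delta> by auto
    have L: "Ilow \<Omega> \<Omega> g x = (SUP \<delta>\<in>{0<..}. INF y\<in>Bd \<Omega> \<delta> x \<inter> \<Omega>. fst (g y))"
      unfolding Ilow_def using Inf_V[OF gok[OF sub1]] by simp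
    have U: "Supp \<Omega> \<Omega> g x = (INF \<delta>\<in>{0<..}. SUP y\<in>Bd \<Omega> \<delta> x \<inter> \<Omega>. snd (g y))"
      unfolding Supp_def using Sup_V[OF gok[OF sub1]] by simp
    have "Ilow \<Omega> \<Omega> g x = I x"
    proof (rule antisym)
      show "Ilow \<Omega> \<Omega> g x \<le> I x" unfolding L I_def
      proof (rule SUP_mono)
        fix \<delta> :: real assume "\<delta> \<in> {0<..}"
        have "(INF y\<in>Bd \<Omega> \<delta> x \<inter> \<Omega>. fst (g y)) \<le> (INF y\<in>Bd \<Omega> \<delta> x \<inter> D. ereal (f y))"
          by (rule INF_greatest, rule INF_lower2[where i=y for y]) (use assms(2) gD in auto)
        then show "\<exists>m\<in>{0<..}. (INF y\<in>Bd \<Omega> \<delta> x \<inter> \<Omega>. fst (g y)) \<le> (INF y\<in>Bd \<Omega> m x \<inter> D. ereal (f y))"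
          using \<open>\<delta> \<in> {0<..}\<close> by blast
      qed
      show "I x \<le> Ilow \<Omega> \<Omega> g x" unfolding L I_def
      proof (rule SUP_mono)
        fix \<delta> :: real assume "\<delta> \<in> {0<..}"
        have "(INF y\<in>Bd \<Omega> \<delta> x \<inter> D. ereal (f y)) \<le> (INF y\<in>Bd \<Omega> \<delta> x \<inter> \<Omega>. fst (g y))"
        proof (rule INF_greatest)
          fix y assume y: "y \<in> Bd \<Omega> \<delta> x \<inter> \<Omega>"
          have "(INF y\<in>Bd \<Omega> \<delta> x \<inter> D. ereal (f y)) \<le> I y"
            unfolding I_def using env_low_le y by blast
          also have "\<dots> \<le> fst (g y)" using gb y by auto
          finally show "(INF y\<in>Bd \<Omega> \<delta> x \<inter> D. ereal (f y)) \<le> fst (g y)" .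
        qed
        then show "\<exists>m\<in>{0<..}. (INF y\<in>Bd \<Omega> \<delta> x \<inter> D. ereal (f y)) \<le> (INF y\<in>Bd \<Omega> m x \<inter> \<Omega>. fst (g y))"
          using \<open>\<delta> \<in> {0<..}\<close> by blast
      qed
    qed
    moreover have "Supp \<Omega> \<Omega> g x = S x"
    proof (rule antisym)
      show "S x \<le> Supp \<Omega> \<Omega> g x" unfolding U S_def
      proof (rule INF_mono)
        fix \<delta> :: real assume "\<delta> \<in> {0<..}"
        have "(SUP y\<in>Bd \<Omega> \<delta> x \<inter> D. ereal (f y)) \<le> (SUP y\<in>Bd \<Omega> \<delta> x \<inter> \<Omega>. snd (g y))"
          by (rule SUP_least, rule SUP_upper2[where i=y for y]) (use assms(2) gD in auto)
        then show "\<exists>m\<in>{0<..}. (SUP y\<in>Bd \<Omega> m x \<inter> D. ereal (f y)) \<le> (SUP y\<in>Bd \<Omega> \<delta> x \<inter> \<Omega>. snd (g y))"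
          using \<open>\<delta> \<in> {0<..}\<close> by blast
      qed
      show "Supp \<Omega> \<Omega> g x \<le> S x" unfolding U S_def
      proof (rule INF_mono)
        fix \<delta> :: real assume "\<delta> \<in> {0<..}"
        have "(SUP y\<in>Bd \<Omega> \<delta> x \<inter> \<Omega>. snd (g y)) \<le> (SUP y\<in>Bd \<Omega> \<delta> x \<inter> D. ereal (f y))"
        proof (rule SUP_least)
          fix y assume y: "y \<in> Bd \<Omega> \<delta> x \<inter> \<Omega>"
          have "snd (g y) \<le> S y" using gb y by auto
          also have "S y \<le> (SUP y\<in>Bd \<Omega> \<delta> x \<inter> D. ereal (f y))"
            unfolding S_def using env_up_le y by blast
          finally show "snd (g y) \<le> (SUP y\<in>Bd \<Omega> \<delta> x \<inter> D. ereal (f y))" .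
        qed
        then show "\<exists>m\<in>{0<..}. (SUP y\<in>Bd \<Omega> m x \<inter> \<Omega>. snd (g y)) \<le> (SUP y\<in>Bd \<Omega> \<delta> x \<inter> D. ereal (f y))"
          using \<open>\<delta> \<in> {0<..}\<close> by blast
      qed
    qed
    ultimately show "Fenv \<Omega> \<Omega> g x = Fenv D \<Omega> fp x"
      using IS by (simp add: Fenv_def)
  qed
  have "H_continuous \<Omega> (Fenv D \<Omega> fp)"
    unfolding H_continuous_def using hfun Hc by blast
  then show ?thesis using part1 unfolding fp_def by blast
qed

end
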